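(* Any solution $u^h\in C(G^h)$ of $F^{W,h}[u^h](x)=0$ for all $x\in G^h$ satisfies $$\min_{y\in G^h}g(y)\le u^h(x)\le\max_{y\in G^h}g(y)\qquad\text{for all }x\in G^h;$$ in particular it is bounded independently of $h$.
   Context: Let $\Omega\subset D=[-1,1]^n$, $h>0$, $g\in C(G^h)$. Grid: $G^h=\{x\in h\mathbb{Z}^n: x\in D\}$, $G^h_V=\Omega\cap G^h$, $\partial G^h=G^h\setminus G^h_V$; $C(G^h)$ is the set of functions $G^h\to\mathbb{R}$. A grid direction set $\mathcal{D}^W$ is a finite set of nonzero vectors of $\mathbb{Z}^n$ spanning $\mathbb{R}^n$ and closed under $v\mapsto-v$; $h$ is assumed small enough that $x\pm hv\in G^h$ for all $x\in G^h_V$, $v\in\mathcal{D}^W$. For $v\in\mathcal{D}^W$, $D^h_{vv}u(x)=\frac{u(x+hv)-2u(x)+u(x-hv)}{h^2\|v\|^2}$ ($x\in G^h_V$), $\lambda^h_{\mathcal{D}^W}[u](x)=\min_{v\in\mathcal{D}^W}D^h_{vv}u(x)$, and $F^{W,h}[u](x)=\max\{u(x)-g(x),-\lambda^h_{\mathcal{D}^W}[u](x)\}$ for $x\in G^h_V$, $F^{W,h}[u](x)=u(x)-g(x)$ for $x\in\partial G^h$. *)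

theory Defs
  imports "HOL-Analysis.Analysis"
begin

definition cubeD :: "(real^'n) set" where
  "cubeD = {x. \<forall>i. \<bar>x $ i\<bar> \<le> 1}"

definition grid :: "real \<Rightarrow> (real^'n) set" where
  "grid h = {x. (\<forall>i. \<exists>k::int. x $ i = h * of_int k)} \<inter> cubeD"

definition gridV :: "(real^'n) set \<Rightarrow> real \<Rightarrow> (real^'n) set" where
  "gridV \<Omega> h = \<Omega> \<inter> grid h"

definition gridB :: "(real^'n) set \<Rightarrow> real \<Rightarrow> (real^'n) set" where
  "gridB \<Omega> h = grid h - gridV \<Omega> h"

definition int_vec :: "real^'n \<Rightarrow> bool" where
  "int_vec v \<longleftrightarrow> (\<forall>i. v $ i \<in> \<int>)"

definition grid_direction_set :: "(real^'n) set \<Rightarrow> bool" where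
  "grid_direction_set W \<longleftrightarrow> finite W \<and> (\<forall>v\<in>W. v \<noteq> 0 \<and> int_vec v)
      \<and> span W = UNIV \<and> (\<forall>v\<in>W. - v \<in> W)"

definition Dvv :: "real \<Rightarrow> real^'n \<Rightarrow> (real^'n \<Rightarrow> real) \<Rightarrow> real^'n \<Rightarrow> real" where
  "Dvv h v u x = (u (x + h *\<^sub>R v) - 2 * u x + u (x - h *\<^sub>R v)) / (h\<^sup>2 * (norm v)\<^sup>2)"

definition lambda_h :: "real \<Rightarrow> (real^'n) set \<Rightarrow> (real^'n \<Rightarrow> real) \<Rightarrow> real^'n \<Rightarrow> real" where
  "lambda_h h W u x = Min ((\<lambda>v. Dvv h v u x) ` W)"

definition FWh :: "(real^'n) set \<Rightarrow> real \<Rightarrow> (real^'n) set \<Rightarrow> (real^'n \<Rightarrow> real)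
    \<Rightarrow> (real^'n \<Rightarrow> real) \<Rightarrow> real^'n \<Rightarrow> real" where
  "FWh \<Omega> h W g u x =
     (if x \<in> gridV \<Omega> h then max (u x - g x) (- lambda_h h W u x) else u x - g x)"

end

theory Submission
  imports Defs
begin

lemma finite_vec_comp:
  assumes "finite S"
  shows "finite {x::real^'n. \<forall>i. x $ i \<in> S}"
proof -
  have sub: "{x::real^'n. \<forall>i. x $ i \<in> S} \<subseteq> vec_lambda ` (PiE UNIV (\<lambda>_. S))"
  proof
    fix x :: "real^'n" assume "x \<in> {x. \<forall>i. x $ i \<in> S}"
    then have "(\<lambda>i. x $ i) \<in> PiE UNIV (\<lambda>_. S)" by auto
    moreover have "x = vec_lambda (\<lambda>i. x $ i)" by simp
    ultimately show "x \<in> vec_lambda ` (PiE UNIV (\<lambda>_. S))" by blast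
  qed
  have "finite (PiE (UNIV::'n set) (\<lambda>_. S))"
    using assms by (simp add: finite_PiE)
  hence "finite (vec_lambda ` (PiE (UNIV::'n set) (\<lambda>_. S)))" by (rule finite_imageI)
  thus ?thesis by (rule finite_subset[OF sub])
qed

lemma para: "(norm (x + w))\<^sup>2 + (norm (x - w))\<^sup>2 = 2 * (norm x)\<^sup>2 + 2 * (norm (w::real^'n))\<^sup>2"
  by (simp add: power2_norm_eq_inner inner_add_left inner_add_right inner_diff_left inner_diff_right inner_commute)

lemma finite_grid:
  assumes "h > 0"
  shows "finite (grid h :: (real^'n) set)"
proof -
  define N where "N = \<lceil>1/h\<rceil>"
  define S where "S = (\<lambda>k::int. h * of_int k) ` {-N..N}"
  have sub: "grid h \<subseteq> {x::real^'n. \<forall>i. x $ i \<in> S}"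
  proof (clarsimp)
    fix x :: "real^'n" and i assume "x \<in> grid h"
    then obtain k :: int where k: "x $ i = h * of_int k" and b: "\<bar>x $ i\<bar> \<le> 1"
      unfolding grid_def cubeD_def by blast
    have "\<bar>h * of_int k\<bar> \<le> 1" using k b by simp
    hence "h * \<bar>of_int k\<bar> \<le> 1" using assms by (simp add: abs_mult)
    hence "\<bar>of_int k\<bar> \<le> 1/h" using assms by (simp add: field_simps)
    hence "real_of_int \<bar>k\<bar> \<le> real_of_int N" unfolding N_def
      using le_of_int_ceiling[of "1/h"] by (simp only: of_int_abs)
    hence "\<bar>k\<bar> \<le> N" by linarith
    hence "k \<in> {-N..N}" by auto
    thus "x $ i \<in> S" unfolding S_def using k by blast
  qed
  have fS: "finite S" unfolding S_def by simp
  show ?thesis by (rule finite_subset[OF sub finite_vec_comp[OF fS]])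
qed

theorem mainTheorem7:
  fixes \<Omega> :: "(real^'n) set" and h :: real and W :: "(real^'n) set"
    and g u :: "real^'n \<Rightarrow> real"
  assumes "\<Omega> \<subseteq> cubeD" and "h > 0"
    and "grid_direction_set W"
    and "\<forall>x\<in>gridV \<Omega> h. \<forall>v\<in>W. x + h *\<^sub>R v \<in> grid h \<and> x - h *\<^sub>R v \<in> grid h"
    and "\<forall>x\<in>grid h. FWh \<Omega> h W g u x = 0"
  shows "\<forall>x\<in>grid h. Min (g ` grid h) \<le> u x \<and> u x \<le> Max (g ` grid h)"
proof -
  have fin: "finite (grid h :: (real^'n) set)" using finite_grid assms(2) by blast
  have ug: "u x \<le> g x" if xg: "x \<in> grid h" for x
  proof -
    have F: "FWh \<Omega> h W g u x = 0" using assms(5) xg by blast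
    show ?thesis
    proof (cases "x \<in> gridV \<Omega> h")
      case True
      hence "max (u x - g x) (- lambda_h h W u x) = 0" using F unfolding FWh_def by simp
      moreover have "u x - g x \<le> max (u x - g x) (- lambda_h h W u x)" by (rule max.cobounded1)
      ultimately show ?thesis by linarith
    next
      case False
      hence "u x - g x = 0" using F unfolding FWh_def by simp
      thus ?thesis by linarith
    qed
  qed
  have upper: "u x \<le> Max (g ` grid h)" if xg: "x \<in> grid h" for x
  proof -
    have "g x \<le> Max (g ` grid h)" using fin xg by simp
    thus ?thesis using ug[OF xg] by linarith
  qed
  have lower: "Min (g ` grid h) \<le> u x" if x: "x \<in> grid h" for x
  proof -
    define m where "m = Min (u ` grid h)"
    define M where "M = {y\<in>grid h. u y = m}"
    have ne: "(grid h :: (real^'n) set) \<noteq> {}" using x by blast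
    have "m \<in> u ` grid h" unfolding m_def
      by (rule Min_in) (use fin ne in auto)
    then obtain y0 where "y0 \<in> grid h" "u y0 = m" by blast
    hence Mne: "M \<noteq> {}" unfolding M_def by blast
    have Mfin: "finite M" unfolding M_def by (rule finite_subset[OF _ fin]) blast
    have "Max (norm ` M) \<in> norm ` M" by (rule Max_in) (use Mfin Mne in auto)
    then obtain x0 where x0M: "x0 \<in> M" and x0e: "norm x0 = Max (norm ` M)" by (metis imageE)
    have x0max: "\<forall>y\<in>M. norm y \<le> norm x0"
    proof
      fix y assume "y \<in> M"
      hence "norm y \<le> Max (norm ` M)" by (intro Max_ge) (use Mfin in auto)
      thus "norm y \<le> norm x0" using x0e by simp
    qed
    have x0g: "x0 \<in> grid h" and ux0: "u x0 = m" using x0M unfolding M_def by blast+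
    have mle: "m \<le> u y" if yg: "y \<in> grid h" for y unfolding m_def
      by (rule Min_le) (use fin yg in auto)
    have key: "g x0 \<le> u x0"
    proof (rule ccontr)
      assume lt: "\<not> g x0 \<le> u x0"
      have F: "FWh \<Omega> h W g u x0 = 0" using assms(5) x0g by blast
      have x0V: "x0 \<in> gridV \<Omega> h"
      proof (rule ccontr)
        assume "x0 \<notin> gridV \<Omega> h"
        hence "u x0 - g x0 = 0" using F unfolding FWh_def by simp
        thus False using lt by linarith
      qed
      hence mx: "max (u x0 - g x0) (- lambda_h h W u x0) = 0" using F unfolding FWh_def by simp
      have lam: "lambda_h h W u x0 = 0"
        using mx lt by (cases "u x0 - g x0 \<le> - lambda_h h W u x0") (simp_all add: max_def)
      have Wfin: "finite W" and Wne: "W \<noteq> {}"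
      proof -
        show "finite W" using assms(3) unfolding grid_direction_set_def by blast
        show "W \<noteq> {}"
        proof
          assume "W = {}"
          hence "span W = {0}" by simp
          moreover have "span W = UNIV" using assms(3) unfolding grid_direction_set_def by blast
          ultimately have "axis undefined (1::real) \<in> ({0} :: (real^'n) set)" by simp
          thus False by simp
        qed
      qed
      have "lambda_h h W u x0 \<in> (\<lambda>v. Dvv h v u x0) ` W"
        unfolding lambda_h_def using Wfin Wne by simp
      then obtain v where vW: "v \<in> W" and D0: "Dvv h v u x0 = 0" using lam by auto
      have vnz: "v \<noteq> 0" using assms(3) vW unfolding grid_direction_set_def by blast
      have p: "x0 + h *\<^sub>R v \<in> grid h" and q: "x0 - h *\<^sub>R v \<in> grid h"
        using assms(4) x0V vW by auto
      have den: "h\<^sup>2 * (norm v)\<^sup>2 \<noteq> 0" using assms(2) vnz by simp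
      have sum: "u (x0 + h *\<^sub>R v) + u (x0 - h *\<^sub>R v) = 2 * u x0"
      proof -
        have "(u (x0 + h *\<^sub>R v) - 2 * u x0 + u (x0 - h *\<^sub>R v)) / (h\<^sup>2 * (norm v)\<^sup>2) = 0"
          using D0 unfolding Dvv_def .
        hence "u (x0 + h *\<^sub>R v) - 2 * u x0 + u (x0 - h *\<^sub>R v) = 0"
          using den by (simp only: divide_eq_0_iff) blast
        thus ?thesis by linarith
      qed
      have e1: "u (x0 + h *\<^sub>R v) = m" using sum mle[OF p] mle[OF q] ux0 by linarith
      have e2: "u (x0 - h *\<^sub>R v) = m" using sum mle[OF p] mle[OF q] ux0 by linarith
      have n1: "norm (x0 + h *\<^sub>R v) \<le> norm x0" using x0max p e1 unfolding M_def by blast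
      have n2: "norm (x0 - h *\<^sub>R v) \<le> norm x0" using x0max q e2 unfolding M_def by blast
      have "(norm (x0 + h *\<^sub>R v))\<^sup>2 + (norm (x0 - h *\<^sub>R v))\<^sup>2
            = 2 * (norm x0)\<^sup>2 + 2 * (norm (h *\<^sub>R v))\<^sup>2"
        by (rule para)
      moreover have "norm (h *\<^sub>R v) > 0" using assms(2) vnz by simp
      moreover have "(norm (x0 + h *\<^sub>R v))\<^sup>2 \<le> (norm x0)\<^sup>2" using n1 by (simp add: power_mono)
      moreover have "(norm (x0 - h *\<^sub>R v))\<^sup>2 \<le> (norm x0)\<^sup>2" using n2 by (simp add: power_mono)
      ultimately show False by (smt (verit) zero_less_power)
    qed
    have "Min (g ` grid h) \<le> g x0" by (rule Min_le) (use fin x0g in auto)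
    also have "\<dots> \<le> u x0" by (rule key)
    also have "\<dots> \<le> u x" using ux0 mle[OF x] by simp
    finally show ?thesis .
  qed
  show ?thesis using upper lower by blast
qed

end
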